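(* In the model below, assume $\lambda<\mu$. Under any transmission scheme, the expected per-packet decoding delay at any receiver (time from a packet's arrival at the sender until it is decoded by that receiver) is $\Omega\left(\frac{1}{1-\rho}\right)$ as $\rho=\lambda/\mu\to1^-$ (with $\lambda,\mu\in(0,1)$ and one of them held fixed).
   Context: Model: a sender broadcasts a stream of packets to $n\ge1$ receivers. Packets are vectors over a finite field; time is slotted; in each slot one packet arrives at the sender with probability $\lambda$, independently across slots. The sender transmits at most one packet (a linear combination of the packets it holds) per slot; each receiver independently receives it with probability $\mu$, and otherwise suffers an erasure, independently across receivers and slots; feedback is perfect. $\rho=\lambda/\mu$. *)

theory Defs
  imports "HOL-Probability.Probability"
begin

text \<open>Outcome of one time slot: whether a packet arrives at the sender, and for each
receiver j whether it receives the sender's transmission in that slot.\<close>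
type_synonym slot = "bool \<times> (nat \<Rightarrow> bool)"

definition slot_pmf :: "real \<Rightarrow> real \<Rightarrow> nat \<Rightarrow> slot pmf" where
  "slot_pmf lam mu n = pair_pmf (bernoulli_pmf lam) (Pi_pmf {..<n} False (\<lambda>_. bernoulli_pmf mu))"

definition sample_space :: "real \<Rightarrow> real \<Rightarrow> nat \<Rightarrow> slot stream measure" where
  "sample_space lam mu n = stream_space (measure_pmf (slot_pmf lam mu n))"

text \<open>Number of packets arrived up to and including slot t (packets are numbered 0,1,2,...).\<close>
definition arrived :: "slot stream \<Rightarrow> nat \<Rightarrow> nat" where
  "arrived \<omega> t = card {s. s \<le> t \<and> fst (\<omega> !! s)}"

definition arrival_time :: "slot stream \<Rightarrow> nat \<Rightarrow> nat" where
  "arrival_time \<omega> k = (LEAST t. k < arrived \<omega> t)"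

text \<open>A (deterministic, causal) transmission scheme: in slot t, given the history of the
previous slots (arrivals and all receivers' feedback) and whether a packet arrives in slot t,
it chooses the coefficient vector (indexed by packet number) of the linear combination it sends.
The zero vector means no transmission.\<close>
type_synonym 'F scheme = "nat \<Rightarrow> slot list \<Rightarrow> bool \<Rightarrow> (nat \<Rightarrow> 'F)"

text \<open>The sender can only combine packets it holds, i.e. packets that have arrived.\<close>
definition admissible :: "('F::zero) scheme \<Rightarrow> bool" where
  "admissible \<sigma> \<longleftrightarrow> (\<forall>t hist b i. \<sigma> t hist b i \<noteq> 0 \<longrightarrow>
      i < length (filter fst hist) + (if b then 1 else 0))"

definition coeff :: "'F scheme \<Rightarrow> slot stream \<Rightarrow> nat \<Rightarrow> (nat \<Rightarrow> 'F)" where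
  "coeff \<sigma> \<omega> t = \<sigma> t (stake t \<omega>) (fst (\<omega> !! t))"

definition decoded :: "('F::field) scheme \<Rightarrow> nat \<Rightarrow> slot stream \<Rightarrow> nat \<Rightarrow> nat \<Rightarrow> bool" where
  "decoded \<sigma> j \<omega> k d \<longleftrightarrow> (\<exists>f :: nat \<Rightarrow> 'F. \<forall>i.
      (if i = k then 1 else 0) = (\<Sum>t\<in>{t. t \<le> d \<and> snd (\<omega> !! t) j}. f t * coeff \<sigma> \<omega> t i))"

text \<open>Decoding delay of packet k at receiver j: from its arrival (start of its arrival slot)
until its decoding (end of the decoding slot); infinite if never decoded.\<close>
definition delay :: "('F::field) scheme \<Rightarrow> nat \<Rightarrow> slot stream \<Rightarrow> nat \<Rightarrow> ennreal" where
  "delay \<sigma> j \<omega> k = (if \<exists>d. decoded \<sigma> j \<omega> k d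
      then of_nat (Suc (LEAST d. decoded \<sigma> j \<omega> k d) - arrival_time \<omega> k) else \<infinity>)"

definition exp_delay :: "real \<Rightarrow> real \<Rightarrow> nat \<Rightarrow> ('F::field) scheme \<Rightarrow> nat \<Rightarrow> nat \<Rightarrow> ennreal" where
  "exp_delay lam mu n \<sigma> j k = (\<integral>\<^sup>+ \<omega>. delay \<sigma> j \<omega> k \<partial>sample_space lam mu n)"

definition avg_delay :: "real \<Rightarrow> real \<Rightarrow> nat \<Rightarrow> ('F::field) scheme \<Rightarrow> nat \<Rightarrow> ennreal" where
  "avg_delay lam mu n \<sigma> j = limsup (\<lambda>N. (\<Sum>k<N. exp_delay lam mu n \<sigma> j k) / of_nat N)"

end

theory Submission
  imports Defs "HOL-Library.Function_Algebras" "HOL-Real_Asymp.Real_Asymp"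
begin


definition fscale :: "'F::field \<Rightarrow> (nat \<Rightarrow> 'F) \<Rightarrow> (nat \<Rightarrow> 'F)" where
  "fscale c f = (\<lambda>i. c * f i)"

interpretation fvs: vector_space "fscale :: 'F::field \<Rightarrow> _"
  by unfold_locales (auto simp: fscale_def fun_eq_iff algebra_simps)

definition Aa :: "slot stream \<Rightarrow> nat \<Rightarrow> nat" where
  "Aa \<omega> m = card {t. t < m \<and> fst (\<omega> !! t)}"
definition Rr :: "nat \<Rightarrow> slot stream \<Rightarrow> nat \<Rightarrow> nat" where
  "Rr j \<omega> m = card {t. t < m \<and> snd (\<omega> !! t) j}"

lemma card_Suc_split: "card {t. t < Suc m \<and> P t} = card {t. t < m \<and> P t} + (if P m then 1 else 0)"
proof -
  have "{t. t < Suc m \<and> P t} = {t. t < m \<and> P t} \<union> (if P m then {m} else {})" by (auto simp: less_Suc_eq)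
  then show ?thesis by (auto simp: card_insert_if less_Suc_eq)
qed

lemma Aa_Suc: "Aa \<omega> (Suc m) = Aa \<omega> m + (if fst (\<omega> !! m) then 1 else 0)"
  unfolding Aa_def by (rule card_Suc_split)
lemma Rr_Suc: "Rr j \<omega> (Suc m) = Rr j \<omega> m + (if snd (\<omega> !! m) j then 1 else 0)"
  unfolding Rr_def by (rule card_Suc_split)
lemma Aa_0[simp]: "Aa \<omega> 0 = 0" by (simp add: Aa_def)
lemma Rr_0[simp]: "Rr j \<omega> 0 = 0" by (simp add: Rr_def)

lemma Aa_mono: "m \<le> m' \<Longrightarrow> Aa \<omega> m \<le> Aa \<omega> m'"
  unfolding Aa_def by (rule card_mono) auto
lemma Rr_mono: "m \<le> m' \<Longrightarrow> Rr j \<omega> m \<le> Rr j \<omega> m'"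
  unfolding Rr_def by (rule card_mono) auto
lemma Aa_le: "Aa \<omega> m \<le> m"
  unfolding Aa_def using card_mono[of "{..<m}" "{t. t < m \<and> fst (\<omega> !! t)}"] by auto

lemma Rr_diff: "m0 \<le> m \<Longrightarrow> card {t. m0 \<le> t \<and> t < m \<and> snd (\<omega> !! t) j} = Rr j \<omega> m - Rr j \<omega> m0"
proof -
  assume h: "m0 \<le> m"
  have "{t. m0 \<le> t \<and> t < m \<and> snd (\<omega> !! t) j} = {t. t < m \<and> snd (\<omega> !! t) j} - {t. t < m0 \<and> snd (\<omega> !! t) j}"
    by auto
  moreover have "{t. t < m0 \<and> snd (\<omega> !! t) j} \<subseteq> {t. t < m \<and> snd (\<omega> !! t) j}" using h by auto
  ultimately show ?thesis unfolding Rr_def by (simp add: card_Diff_subset)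
qed

lemma len_filter_stake: "length (filter fst (stake t \<omega>)) = Aa \<omega> t"
  by (induction t) (auto simp del: stake.simps(2) simp add: stake_Suc Aa_Suc)

lemma arrived_Aa: "arrived \<omega> d = Aa \<omega> (Suc d)"
  unfolding arrived_def Aa_def by (simp add: less_Suc_eq_le)

lemma coeff_zero:
  assumes "admissible \<sigma>" "Aa \<omega> (Suc t) \<le> i"
  shows "coeff \<sigma> \<omega> t i = 0"
  using assms unfolding admissible_def coeff_def
  by (metis (full_types) Aa_Suc len_filter_stake not_le)

lemma sum_fun_apply': "(\<Sum>t\<in>T. g t) i = (\<Sum>t\<in>T. g t i)" for g :: "'a \<Rightarrow> nat \<Rightarrow> 'F::field"
  by (induction T rule: infinite_finite_induct) auto

definition uvec :: "nat \<Rightarrow> nat \<Rightarrow> 'F::field" where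
  "uvec k = (\<lambda>i. if i = k then 1 else 0)"

lemma uvec_indep: "fvs.independent (uvec ` K :: (nat \<Rightarrow> 'F::field) set)"
proof -
  have "uvec k \<notin> fvs.span (uvec ` K - {uvec k} :: (nat \<Rightarrow> 'F) set)" for k
  proof -
    have "fvs.span (uvec ` K - {uvec k} :: (nat \<Rightarrow> 'F) set) \<subseteq> {u. u k = 0}"
    proof (rule fvs.span_minimal)
      show "uvec ` K - {uvec k} \<subseteq> {u :: nat \<Rightarrow> 'F. u k = 0}"
        by (auto simp: uvec_def)
      show "fvs.subspace {u :: nat \<Rightarrow> 'F. u k = 0}"
        by (auto simp: fvs.subspace_def fscale_def)
    qed
    then show ?thesis by (auto simp: uvec_def)
  qed
  then show ?thesis unfolding fvs.dependent_def by auto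
qed

lemma decode_bound:
  fixes \<sigma> :: "('F::field) scheme"
  assumes adm: "admissible \<sigma>" and m0: "m0 \<le> Suc d"
  shows "finite {k. Aa \<omega> m0 \<le> k \<and> decoded \<sigma> j \<omega> k d} \<and>
    card {k. Aa \<omega> m0 \<le> k \<and> decoded \<sigma> j \<omega> k d} \<le> Rr j \<omega> (Suc d) - Rr j \<omega> m0"
proof -
  define K where "K = {k. Aa \<omega> m0 \<le> k \<and> decoded \<sigma> j \<omega> k d}"
  define T' where "T' = {t. m0 \<le> t \<and> t < Suc d \<and> snd (\<omega> !! t) j}"
  define w where "w t = (\<lambda>i. if Aa \<omega> m0 \<le> i then coeff \<sigma> \<omega> t i else (0::'F))" for t
  have finT: "finite T'" unfolding T'_def by auto
  have cardT: "card T' = Rr j \<omega> (Suc d) - Rr j \<omega> m0"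
    unfolding T'_def using Rr_diff[OF m0] by simp
  have sub: "(uvec ` K :: (nat \<Rightarrow> 'F) set) \<subseteq> fvs.span (w ` T')"
  proof
    fix v assume "v \<in> (uvec ` K :: (nat \<Rightarrow> 'F) set)"
    then obtain k where k: "k \<in> K" and v: "v = uvec k" by auto
    from k obtain f :: "nat \<Rightarrow> 'F" where f: "\<And>i. (if i = k then 1 else 0) =
       (\<Sum>t\<in>{t. t \<le> d \<and> snd (\<omega> !! t) j}. f t * coeff \<sigma> \<omega> t i)"
      and kge: "Aa \<omega> m0 \<le> k"
      unfolding K_def decoded_def by blast
    have "v = (\<Sum>t\<in>T'. fscale (f t) (w t))"
    proof
      fix i
      show "v i = (\<Sum>t\<in>T'. fscale (f t) (w t)) i"
      proof (cases "Aa \<omega> m0 \<le> i")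
        case False
        then show ?thesis using kge by (auto simp: v uvec_def sum_fun_apply' fscale_def w_def)
      next
        case True
        have S: "{t. t \<le> d \<and> snd (\<omega> !! t) j} = T' \<union> {t. t < m0 \<and> snd (\<omega> !! t) j}"
          using m0 unfolding T'_def by auto
        have z: "(\<Sum>t\<in>{t. t < m0 \<and> snd (\<omega> !! t) j}. f t * coeff \<sigma> \<omega> t i) = 0"
        proof (rule sum.neutral, safe)
          fix t assume "t < m0"
          then have "Aa \<omega> (Suc t) \<le> i" using Aa_mono[of "Suc t" m0 \<omega>] True by auto
          then show "f t * coeff \<sigma> \<omega> t i = 0" using coeff_zero[OF adm] by simp
        qed
        have "v i = (\<Sum>t\<in>{t. t \<le> d \<and> snd (\<omega> !! t) j}. f t * coeff \<sigma> \<omega> t i)"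
          using f[of i] by (simp add: v uvec_def)
        also have "\<dots> = (\<Sum>t\<in>T'. f t * coeff \<sigma> \<omega> t i)"
          unfolding S by (subst sum.union_disjoint) (use finT z in \<open>auto simp: T'_def\<close>)
        finally show ?thesis using True by (simp add: sum_fun_apply' fscale_def w_def)
      qed
    qed
    also have "\<dots> \<in> fvs.span (w ` T')"
      by (intro fvs.span_sum fvs.span_scale fvs.span_base) auto
    finally show "v \<in> fvs.span (w ` T')" .
  qed
  have b: "finite (uvec ` K :: (nat \<Rightarrow> 'F) set) \<and> card (uvec ` K :: (nat \<Rightarrow> 'F) set) \<le> card (w ` T')"
    by (rule fvs.independent_span_bound[OF finite_imageI[OF finT] uvec_indep sub])
  have inj: "inj (uvec :: nat \<Rightarrow> nat \<Rightarrow> 'F)"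
    by (rule injI) (metis uvec_def zero_neq_one)
  have "card (w ` T') \<le> card T'" by (rule card_image_le[OF finT])
  then show ?thesis using b inj cardT unfolding K_def[symmetric]
    by (metis (no_types, lifting) card_image dual_order.trans finite_imageD inj_on_subset subset_UNIV)
qed




definition xv :: "nat \<Rightarrow> slot \<Rightarrow> int" where
  "xv j x = (if fst x then 1 else 0) - (if snd x j then 1 else 0)"
definition Fs :: "nat \<Rightarrow> nat \<Rightarrow> slot \<Rightarrow> nat" where
  "Fs j l x = nat (int l + xv j x)"

primrec st :: "nat \<Rightarrow> nat \<Rightarrow> nat \<Rightarrow> slot stream \<Rightarrow> nat" where
  "st j l 0 \<omega> = l"
| "st j l (Suc t) \<omega> = st j (Fs j l (shd \<omega>)) t (stl \<omega>)"

lemma st_Suc_fwd: "st j l (Suc t) \<omega> = Fs j (st j l t \<omega>) (\<omega> !! t)"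
  by (induction t arbitrary: l \<omega>) auto

lemma st_walk: "st j 0 m \<omega> = 0 \<or> (\<exists>m0\<le>m. int (st j 0 m \<omega>) =
   (int (Aa \<omega> m) - int (Aa \<omega> m0)) - (int (Rr j \<omega> m) - int (Rr j \<omega> m0)))"
proof (induction m)
  case 0
  then show ?case by simp
next
  case (Suc m)
  let ?s = "st j 0 m \<omega>"
  have e: "st j 0 (Suc m) \<omega> = nat (int ?s + xv j (\<omega> !! m))"
    by (simp only: st_Suc_fwd Fs_def)
  show ?case
  proof (cases "int ?s + xv j (\<omega> !! m) \<le> 0")
    case True then show ?thesis using e by simp
  next
    case False
    then have e2: "int (st j 0 (Suc m) \<omega>) = int ?s + xv j (\<omega> !! m)" using e by simp
    from Suc show ?thesis
    proof
      assume s0: "?s = 0"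
      then have "fst (\<omega> !! m) \<and> \<not> snd (\<omega> !! m) j" using False by (auto simp: xv_def split: if_splits)
      then show ?thesis using e2 s0
        by (intro disjI2 exI[of _ m]) (auto simp: Aa_Suc Rr_Suc xv_def)
    next
      assume "\<exists>m0\<le>m. int ?s = (int (Aa \<omega> m) - int (Aa \<omega> m0)) - (int (Rr j \<omega> m) - int (Rr j \<omega> m0))"
      then obtain m0 where "m0 \<le> m" "int ?s = (int (Aa \<omega> m) - int (Aa \<omega> m0)) - (int (Rr j \<omega> m) - int (Rr j \<omega> m0))"
        by blast
      then show ?thesis using e2
        by (intro disjI2 exI[of _ m0]) (auto simp: Aa_Suc Rr_Suc xv_def)
    qed
  qed
qed

lemma queue_bound:
  fixes \<sigma> :: "('F::field) scheme"
  assumes adm: "admissible \<sigma>"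
  shows "st j 0 (Suc d) \<omega> \<le> card {k. k < Aa \<omega> (Suc d) \<and> \<not> decoded \<sigma> j \<omega> k d}"
proof -
  define U where "U = {k. k < Aa \<omega> (Suc d) \<and> \<not> decoded \<sigma> j \<omega> k d}"
  from st_walk[of j "Suc d" \<omega>] show ?thesis
  proof
    assume "st j 0 (Suc d) \<omega> = 0" then show ?thesis by simp
  next
    assume "\<exists>m0\<le>Suc d. int (st j 0 (Suc d) \<omega>) = (int (Aa \<omega> (Suc d)) - int (Aa \<omega> m0)) - (int (Rr j \<omega> (Suc d)) - int (Rr j \<omega> m0))"
    then obtain m0 where m0: "m0 \<le> Suc d" and eq: "int (st j 0 (Suc d) \<omega>) = (int (Aa \<omega> (Suc d)) - int (Aa \<omega> m0)) - (int (Rr j \<omega> (Suc d)) - int (Rr j \<omega> m0))"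
      by blast
    define D where "D = {k. Aa \<omega> m0 \<le> k \<and> decoded \<sigma> j \<omega> k d}"
    have db: "finite D" "card D \<le> Rr j \<omega> (Suc d) - Rr j \<omega> m0"
      using decode_bound[OF adm m0, of \<omega> j] unfolding D_def by auto
    have fU: "finite U" unfolding U_def by auto
    have "{Aa \<omega> m0..<Aa \<omega> (Suc d)} \<subseteq> U \<union> D" unfolding U_def D_def by auto
    then have "card {Aa \<omega> m0..<Aa \<omega> (Suc d)} \<le> card (U \<union> D)"
      by (intro card_mono) (use fU db in auto)
    also have "\<dots> \<le> card U + card D" by (rule card_Un_le)
    finally have "Aa \<omega> (Suc d) - Aa \<omega> m0 \<le> card U + (Rr j \<omega> (Suc d) - Rr j \<omega> m0)"
      using db by simp
    moreover have "Aa \<omega> m0 \<le> Aa \<omega> (Suc d)" "Rr j \<omega> m0 \<le> Rr j \<omega> (Suc d)"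
      using m0 by (auto intro: Aa_mono Rr_mono)
    ultimately show ?thesis using eq unfolding U_def[symmetric] by linarith
  qed
qed

lemma decoded_mono:
  assumes "decoded \<sigma> j \<omega> k d" "d \<le> d'"
  shows "decoded \<sigma> j \<omega> k d'"
proof -
  from assms(1) obtain f where f: "\<forall>i. (if i = k then 1 else 0) =
      (\<Sum>t\<in>{t. t \<le> d \<and> snd (\<omega> !! t) j}. f t * coeff \<sigma> \<omega> t i)"
    unfolding decoded_def by blast
  define f' where "f' t = (if t \<le> d then f t else 0)" for t
  have "\<forall>i. (if i = k then 1 else 0) =
      (\<Sum>t\<in>{t. t \<le> d' \<and> snd (\<omega> !! t) j}. f' t * coeff \<sigma> \<omega> t i)"
  proof
    fix i
    have "(\<Sum>t\<in>{t. t \<le> d' \<and> snd (\<omega> !! t) j}. f' t * coeff \<sigma> \<omega> t i)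
       = (\<Sum>t\<in>{t. t \<le> d \<and> snd (\<omega> !! t) j}. f' t * coeff \<sigma> \<omega> t i)"
      by (rule sum.mono_neutral_right) (use assms(2) in \<open>auto simp: f'_def\<close>)
    also have "\<dots> = (\<Sum>t\<in>{t. t \<le> d \<and> snd (\<omega> !! t) j}. f t * coeff \<sigma> \<omega> t i)"
      by (rule sum.cong) (auto simp: f'_def)
    finally show "(if i = k then 1 else 0) = (\<Sum>t\<in>{t. t \<le> d' \<and> snd (\<omega> !! t) j}. f' t * coeff \<sigma> \<omega> t i)"
      using f by simp
  qed
  then show ?thesis unfolding decoded_def by blast
qed

definition cnt :: "('F::field) scheme \<Rightarrow> nat \<Rightarrow> nat \<Rightarrow> nat \<Rightarrow> slot stream \<Rightarrow> nat" where
  "cnt \<sigma> j N k \<omega> = card {d. d < N \<and> k < Aa \<omega> (Suc d) \<and> \<not> decoded \<sigma> j \<omega> k d}"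

lemma cnt_le_delay: "of_nat (cnt \<sigma> j N k \<omega>) \<le> delay \<sigma> j \<omega> k"
proof (cases "\<exists>d. decoded \<sigma> j \<omega> k d")
  case True
  define D0 where "D0 = (LEAST d. decoded \<sigma> j \<omega> k d)"
  have dD0: "decoded \<sigma> j \<omega> k D0" unfolding D0_def using True by (rule LeastI_ex)
  have "{d. d < N \<and> k < Aa \<omega> (Suc d) \<and> \<not> decoded \<sigma> j \<omega> k d} \<subseteq> {arrival_time \<omega> k..<D0}"
  proof
    fix d assume "d \<in> {d. d < N \<and> k < Aa \<omega> (Suc d) \<and> \<not> decoded \<sigma> j \<omega> k d}"
    then have d: "k < Aa \<omega> (Suc d)" "\<not> decoded \<sigma> j \<omega> k d" by auto
    have a: "arrival_time \<omega> k \<le> d" unfolding arrival_time_def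
      by (rule Least_le) (simp add: arrived_Aa d)
    have b: "d < D0"
    proof (rule ccontr)
      assume "\<not> d < D0"
      then have "decoded \<sigma> j \<omega> k d" using decoded_mono[OF dD0, of d] by simp
      with d show False by simp
    qed
    show "d \<in> {arrival_time \<omega> k..<D0}" using a b by simp
  qed
  then have "cnt \<sigma> j N k \<omega> \<le> card {arrival_time \<omega> k..<D0}"
    unfolding cnt_def by (intro card_mono) auto
  then have "cnt \<sigma> j N k \<omega> \<le> Suc D0 - arrival_time \<omega> k" by simp
  then show ?thesis unfolding delay_def D0_def[symmetric] using True by simp
next
  case False
  then show ?thesis unfolding delay_def by auto
qed

lemma card_swap: "(\<Sum>k<(N::nat). card {d. d < N \<and> P k d}) = (\<Sum>d<N. card {k. k < N \<and> P k d})"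
proof -
  have c: "card {d. d < N \<and> Q d} = (\<Sum>d<N. if Q d then 1 else 0)" for Q
  proof -
    have "{d. d < N \<and> Q d} = {d\<in>{..<N}. Q d}" by auto
    moreover have "(\<Sum>d<N. if Q d then 1 else 0) = (\<Sum>d\<in>{d\<in>{..<N}. Q d}. 1::nat)"
      by (subst sum.inter_filter) auto
    ultimately show ?thesis by simp
  qed
  show ?thesis unfolding c by (rule sum.swap)
qed

lemma sum_cnt_ge:
  fixes \<sigma> :: "('F::field) scheme"
  assumes adm: "admissible \<sigma>"
  shows "(\<Sum>d<N. st j 0 (Suc d) \<omega>) \<le> (\<Sum>k<N. cnt \<sigma> j N k \<omega>)"
proof -
  have "(\<Sum>k<N. cnt \<sigma> j N k \<omega>) = (\<Sum>d<N. card {k. k < N \<and> k < Aa \<omega> (Suc d) \<and> \<not> decoded \<sigma> j \<omega> k d})"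
    unfolding cnt_def by (rule card_swap)
  also have "\<dots> = (\<Sum>d<N. card {k. k < Aa \<omega> (Suc d) \<and> \<not> decoded \<sigma> j \<omega> k d})"
  proof (rule sum.cong[OF refl])
    fix d assume "d \<in> {..<N}"
    then have "Aa \<omega> (Suc d) \<le> N" using Aa_le[of \<omega> "Suc d"] by auto
    then show "card {k. k < N \<and> k < Aa \<omega> (Suc d) \<and> \<not> decoded \<sigma> j \<omega> k d} = card {k. k < Aa \<omega> (Suc d) \<and> \<not> decoded \<sigma> j \<omega> k d}"
      by (intro arg_cong[where f=card]) auto
  qed
  finally have eq: "(\<Sum>k<N. cnt \<sigma> j N k \<omega>) = (\<Sum>d<N. card {k. k < Aa \<omega> (Suc d) \<and> \<not> decoded \<sigma> j \<omega> k d})" .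
  have "(\<Sum>d<N. st j 0 (Suc d) \<omega>) \<le> (\<Sum>d<N. card {k. k < Aa \<omega> (Suc d) \<and> \<not> decoded \<sigma> j \<omega> k d})"
    by (rule sum_mono) (rule queue_bound[OF adm])
  then show ?thesis using eq by simp
qed




lemma bern_nn:
  fixes f :: "bool \<Rightarrow> ennreal"
  assumes "0 \<le> p" "p \<le> 1"
  shows "(\<integral>\<^sup>+x. f x \<partial>measure_pmf (bernoulli_pmf p)) = ennreal p * f True + ennreal (1 - p) * f False"
  using assms by (subst nn_integral_measure_pmf_support[of UNIV]) (auto simp: UNIV_bool mult.commute)

lemma slot_integral:
  fixes h :: "bool \<Rightarrow> bool \<Rightarrow> ennreal"
  assumes j: "j < n" and l: "0 \<le> lam" "lam \<le> 1" and m: "0 \<le> mu" "mu \<le> 1"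
  shows "(\<integral>\<^sup>+x. h (fst x) (snd x j) \<partial>measure_pmf (slot_pmf lam mu n)) =
    ennreal lam * (ennreal mu * h True True + ennreal (1 - mu) * h True False) +
    ennreal (1 - lam) * (ennreal mu * h False True + ennreal (1 - mu) * h False False)"
proof -
  have inner: "(\<integral>\<^sup>+b. h a (b j) \<partial>measure_pmf (Pi_pmf {..<n} False (\<lambda>_. bernoulli_pmf mu)))
     = ennreal mu * h a True + ennreal (1 - mu) * h a False" for a
  proof -
    have "(\<integral>\<^sup>+b. h a (b j) \<partial>measure_pmf (Pi_pmf {..<n} False (\<lambda>_. bernoulli_pmf mu)))
      = (\<integral>\<^sup>+y. h a y \<partial>measure_pmf (map_pmf (\<lambda>b. b j) (Pi_pmf {..<n} False (\<lambda>_. bernoulli_pmf mu))))"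
      by simp
    also have "map_pmf (\<lambda>b. b j) (Pi_pmf {..<n} False (\<lambda>_. bernoulli_pmf mu)) = bernoulli_pmf mu"
      using j by (subst Pi_pmf_component) auto
    finally show ?thesis using bern_nn[OF m] by simp
  qed
  show ?thesis
    unfolding slot_pmf_def nn_integral_pair_pmf' using inner bern_nn[OF l] by simp
qed

definition Sfin :: "nat \<Rightarrow> slot set" where
  "Sfin n = {x. \<forall>i. n \<le> i \<longrightarrow> \<not> snd x i}"

lemma finite_Sfin: "finite (Sfin n)"
proof -
  have "{f :: nat \<Rightarrow> bool. \<forall>i. n \<le> i \<longrightarrow> \<not> f i} \<subseteq> (\<lambda>Z i. i \<in> Z) ` Pow {..<n}"
  proof
    fix f :: "nat \<Rightarrow> bool" assume "f \<in> {f. \<forall>i. n \<le> i \<longrightarrow> \<not> f i}"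
    then have H: "\<forall>i. n \<le> i \<longrightarrow> \<not> f i" by simp
    have feq: "f = (\<lambda>i. i \<in> {i. i < n \<and> f i})" unfolding fun_eq_iff mem_Collect_eq using H leI by blast
    show "f \<in> (\<lambda>Z i. i \<in> Z) ` Pow {..<n}"
    proof (rule image_eqI)
      show "f = (\<lambda>i. i \<in> {i. i < n \<and> f i})" by (rule feq)
      show "{i. i < n \<and> f i} \<in> Pow {..<n}" by auto
    qed
  qed
  then have "finite {f :: nat \<Rightarrow> bool. \<forall>i. n \<le> i \<longrightarrow> \<not> f i}" by (rule finite_subset) auto
  moreover have "Sfin n = UNIV \<times> {f :: nat \<Rightarrow> bool. \<forall>i. n \<le> i \<longrightarrow> \<not> f i}"
    unfolding Sfin_def by auto
  ultimately show ?thesis by simp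
qed

lemma AE_Sfin:
  "AE \<omega> in sample_space lam mu n. \<forall>i. \<omega> !! i \<in> Sfin n"
proof -
  have "AE x in measure_pmf (slot_pmf lam mu n). x \<in> Sfin n"
  proof (subst AE_measure_pmf_iff, safe)
    fix y assume "y \<in> set_pmf (slot_pmf lam mu n)"
    then have "snd y \<in> set_pmf (Pi_pmf {..<n} False (\<lambda>_. bernoulli_pmf mu))"
      unfolding slot_pmf_def by auto
    then show "y \<in> Sfin n" using set_Pi_pmf_subset[of "{..<n}" False "\<lambda>_. bernoulli_pmf mu"]
      unfolding Sfin_def by auto
  qed
  then have "AE \<omega> in sample_space lam mu n. stream_all (\<lambda>x. x \<in> Sfin n) \<omega>"
    unfolding sample_space_def
    by (intro prob_space.AE_stream_all[OF prob_space_measure_pmf]) auto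
  then show ?thesis by (auto elim!: eventually_mono simp: sset_range)
qed

lemma snth_pre: "(\<lambda>\<omega>. \<omega> !! i) -` {c} \<in> sets (stream_space (measure_pmf p))"
proof -
  have "(\<lambda>\<omega>. \<omega> !! i) -` {c} \<inter> space (stream_space (measure_pmf p)) \<in> sets (stream_space (measure_pmf p))"
    by (rule measurable_sets[OF measurable_snth]) simp
  moreover have "space (stream_space (measure_pmf p)) = UNIV" by (simp add: space_stream_space)
  ultimately show ?thesis by simp
qed

lemma pred_snth_eq:
  "{\<omega> \<in> space (stream_space (measure_pmf p)). \<forall>i<m. \<omega> !! i = ys ! i} \<in> sets (stream_space (measure_pmf p))"
proof -
  have "{\<omega> \<in> space (stream_space (measure_pmf p)). \<forall>i<m. \<omega> !! i = ys ! i} =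
     space (stream_space (measure_pmf p)) \<inter> (\<Inter>i\<in>{..<m}. (\<lambda>\<omega>. \<omega> !! i) -` {ys ! i} \<inter> space (stream_space (measure_pmf p)))"
    by auto
  also have "\<dots> \<in> sets (stream_space (measure_pmf p))"
  proof (cases "m = 0")
    case True then show ?thesis by simp
  next
    case False
    show ?thesis using False
      by (intro sets.Int sets.top sets.finite_INT) (auto intro: snth_pre)
  qed
  finally show ?thesis .
qed

lemma prefix_event_meas:
  fixes p :: "'a pmf" and S :: "'a set" and P :: "'a list \<Rightarrow> bool"
  assumes S: "finite S"
  shows "{\<omega> \<in> space (stream_space (measure_pmf p)). (\<forall>i<m. \<omega> !! i \<in> S) \<and> P (stake m \<omega>)}
     \<in> sets (stream_space (measure_pmf p))"
proof -
  define L where "L = {ys. set ys \<subseteq> S \<and> length ys = m \<and> P ys}"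
  have fL: "finite L" unfolding L_def
    by (rule finite_subset[OF _ finite_lists_length_eq[OF S, of m]]) auto
  have "{\<omega> \<in> space (stream_space (measure_pmf p)). (\<forall>i<m. \<omega> !! i \<in> S) \<and> P (stake m \<omega>)}
     = (\<Union>ys\<in>L. {\<omega> \<in> space (stream_space (measure_pmf p)). \<forall>i<m. \<omega> !! i = ys ! i})"
  proof (intro equalityI subsetI)
    fix \<omega> assume h: "\<omega> \<in> {\<omega> \<in> space (stream_space (measure_pmf p)). (\<forall>i<m. \<omega> !! i \<in> S) \<and> P (stake m \<omega>)}"
    then have "stake m \<omega> \<in> L" unfolding L_def by (auto simp: in_set_conv_nth)
    with h show "\<omega> \<in> (\<Union>ys\<in>L. {\<omega> \<in> space (stream_space (measure_pmf p)). \<forall>i<m. \<omega> !! i = ys ! i})"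
      by (intro UN_I[of "stake m \<omega>"]) auto
  next
    fix \<omega> assume "\<omega> \<in> (\<Union>ys\<in>L. {\<omega> \<in> space (stream_space (measure_pmf p)). \<forall>i<m. \<omega> !! i = ys ! i})"
    then obtain ys where ys: "ys \<in> L" and sp: "\<omega> \<in> space (stream_space (measure_pmf p))"
      and e: "\<forall>i<m. \<omega> !! i = ys ! i" by auto
    have st: "stake m \<omega> = ys" using ys e unfolding L_def by (intro nth_equalityI) auto
    have "\<forall>i<m. \<omega> !! i \<in> S" using ys e unfolding L_def by (auto simp: nth_mem subsetD)
    then show "\<omega> \<in> {\<omega> \<in> space (stream_space (measure_pmf p)). (\<forall>i<m. \<omega> !! i \<in> S) \<and> P (stake m \<omega>)}"
      using sp st ys unfolding L_def by auto
  qed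
  also have "\<dots> \<in> sets (stream_space (measure_pmf p))"
    using fL by (intro sets.finite_UN pred_snth_eq) auto
  finally show ?thesis .
qed




lemma prefix_eq:
  assumes e: "\<forall>i<m. \<omega> !! i = \<omega>' !! i" and d: "d < m"
  shows "Aa \<omega> (Suc d) = Aa \<omega>' (Suc d) \<and> decoded \<sigma> j \<omega> k d = decoded \<sigma> j \<omega>' k d"
proof -
  have sn: "\<omega> !! t = \<omega>' !! t" if "t \<le> d" for t using e d that by auto
  have stk: "stake t \<omega> = stake t \<omega>'" if "t \<le> d" for t
    by (rule nth_equalityI) (use sn that in auto)
  have c: "coeff \<sigma> \<omega> t = coeff \<sigma> \<omega>' t" if "t \<le> d" for t
    unfolding coeff_def using stk[OF that] sn[OF that] by simp
  have A: "Aa \<omega> (Suc d) = Aa \<omega>' (Suc d)" unfolding Aa_def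
    by (intro arg_cong[where f=card] Collect_cong) (use sn in \<open>auto simp: less_Suc_eq_le\<close>)
  have S: "{t. t \<le> d \<and> snd (\<omega> !! t) j} = {t. t \<le> d \<and> snd (\<omega>' !! t) j}" using sn by auto
  have "decoded \<sigma> j \<omega> k d = decoded \<sigma> j \<omega>' k d"
    unfolding decoded_def S
    by (intro ex_cong1 all_cong1 arg_cong2[where f="(=)"] refl sum.cong) (auto simp: c)
  with A show ?thesis by simp
qed

definition Ev :: "real \<Rightarrow> real \<Rightarrow> nat \<Rightarrow> ('F::field) scheme \<Rightarrow> nat \<Rightarrow> nat \<Rightarrow> nat \<Rightarrow> nat \<Rightarrow> slot stream set" where
  "Ev lam mu n \<sigma> j N k d = {\<omega> \<in> space (sample_space lam mu n). (\<forall>i<N. \<omega> !! i \<in> Sfin n) \<and>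
      k < Aa \<omega> (Suc d) \<and> \<not> decoded \<sigma> j \<omega> k d}"

lemma Ev_sets:
  assumes "d < N"
  shows "Ev lam mu n \<sigma> j N k d \<in> sets (sample_space lam mu n)"
proof -
  define P where "P ys = (k < Aa (ys @- sconst undefined) (Suc d) \<and> \<not> decoded \<sigma> j (ys @- sconst undefined) k d)" for ys
  have "Ev lam mu n \<sigma> j N k d = {\<omega> \<in> space (stream_space (measure_pmf (slot_pmf lam mu n))).
       (\<forall>i<N. \<omega> !! i \<in> Sfin n) \<and> P (stake N \<omega>)}"
  proof -
    have "P (stake N \<omega>) = (k < Aa \<omega> (Suc d) \<and> \<not> decoded \<sigma> j \<omega> k d)" for \<omega>
    proof -
      have "\<forall>i<N. \<omega> !! i = (stake N \<omega> @- sconst undefined) !! i" by (simp add: shift_snth_less)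
      from prefix_eq[OF this assms, of \<sigma> j k] show ?thesis unfolding P_def by simp
    qed
    then show ?thesis unfolding Ev_def sample_space_def by simp
  qed
  also have "\<dots> \<in> sets (sample_space lam mu n)"
    unfolding sample_space_def by (rule prefix_event_meas[OF finite_Sfin])
  finally show ?thesis .
qed

definition Hf :: "real \<Rightarrow> real \<Rightarrow> nat \<Rightarrow> ('F::field) scheme \<Rightarrow> nat \<Rightarrow> nat \<Rightarrow> nat \<Rightarrow> slot stream \<Rightarrow> ennreal" where
  "Hf lam mu n \<sigma> j N k \<omega> = (\<Sum>d<N. indicator (Ev lam mu n \<sigma> j N k d) \<omega>)"

lemma Hf_meas: "Hf lam mu n \<sigma> j N k \<in> borel_measurable (sample_space lam mu n)"
  unfolding Hf_def by (intro borel_measurable_sum borel_measurable_indicator Ev_sets) auto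

lemma sum_indicator_card:
  "(\<Sum>d<(N::nat). indicator (A d) \<omega> :: ennreal) = of_nat (card {d. d < N \<and> \<omega> \<in> A d})"
  by (induction N) (auto simp: card_Suc_split indicator_def)

lemma Hf_le: "Hf lam mu n \<sigma> j N k \<omega> \<le> delay \<sigma> j \<omega> k"
proof -
  have "Hf lam mu n \<sigma> j N k \<omega> = of_nat (card {d. d < N \<and> \<omega> \<in> Ev lam mu n \<sigma> j N k d})"
    unfolding Hf_def by (rule sum_indicator_card)
  also have "\<dots> \<le> of_nat (cnt \<sigma> j N k \<omega>)"
    unfolding cnt_def by (intro of_nat_mono card_mono) (auto simp: Ev_def)
  also have "\<dots> \<le> delay \<sigma> j \<omega> k" by (rule cnt_le_delay)
  finally show ?thesis .
qed

lemma Hf_eq: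
  assumes "\<forall>i. \<omega> !! i \<in> Sfin n"
  shows "Hf lam mu n \<sigma> j N k \<omega> = of_nat (cnt \<sigma> j N k \<omega>)"
proof -
  have "Hf lam mu n \<sigma> j N k \<omega> = of_nat (card {d. d < N \<and> \<omega> \<in> Ev lam mu n \<sigma> j N k d})"
    unfolding Hf_def by (rule sum_indicator_card)
  also have "{d. d < N \<and> \<omega> \<in> Ev lam mu n \<sigma> j N k d} = {d. d < N \<and> k < Aa \<omega> (Suc d) \<and> \<not> decoded \<sigma> j \<omega> k d}"
    using assms by (auto simp: Ev_def sample_space_def space_stream_space)
  finally show ?thesis unfolding cnt_def .
qed

lemma delay_sum_ge:
  fixes \<sigma> :: "('F::field) scheme"
  assumes adm: "admissible \<sigma>"
  shows "(\<integral>\<^sup>+\<omega>. of_nat (\<Sum>d<N. st j 0 (Suc d) \<omega>) \<partial>sample_space lam mu n)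
     \<le> (\<Sum>k<N. exp_delay lam mu n \<sigma> j k)"
proof -
  have "(\<integral>\<^sup>+\<omega>. of_nat (\<Sum>d<N. st j 0 (Suc d) \<omega>) \<partial>sample_space lam mu n)
     \<le> (\<integral>\<^sup>+\<omega>. (\<Sum>k<N. Hf lam mu n \<sigma> j N k \<omega>) \<partial>sample_space lam mu n)"
  proof (rule nn_integral_mono_AE)
    show "AE \<omega> in sample_space lam mu n. of_nat (\<Sum>d<N. st j 0 (Suc d) \<omega>) \<le> (\<Sum>k<N. Hf lam mu n \<sigma> j N k \<omega>)"
      using AE_Sfin
    proof (rule eventually_mono)
      fix \<omega> :: "slot stream" assume H: "\<forall>i. \<omega> !! i \<in> Sfin n"
      have "(\<Sum>k<N. Hf lam mu n \<sigma> j N k \<omega>) = (\<Sum>k<N. of_nat (cnt \<sigma> j N k \<omega>))"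
        by (rule sum.cong[OF refl]) (rule Hf_eq[OF H])
      also have "\<dots> = of_nat (\<Sum>k<N. cnt \<sigma> j N k \<omega>)" by (rule of_nat_sum[symmetric])
      finally have eq: "(\<Sum>k<N. Hf lam mu n \<sigma> j N k \<omega>) = of_nat (\<Sum>k<N. cnt \<sigma> j N k \<omega>)" .
      have le: "(of_nat (\<Sum>d<N. st j 0 (Suc d) \<omega>) :: ennreal) \<le> of_nat (\<Sum>k<N. cnt \<sigma> j N k \<omega>)"
        using sum_cnt_ge[OF adm, where N=N and j=j and \<omega>=\<omega>] by (rule of_nat_mono)
      show "of_nat (\<Sum>d<N. st j 0 (Suc d) \<omega>) \<le> (\<Sum>k<N. Hf lam mu n \<sigma> j N k \<omega>)"
        unfolding eq by (rule le)
    qed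
  qed
  also have "\<dots> = (\<Sum>k<N. \<integral>\<^sup>+\<omega>. Hf lam mu n \<sigma> j N k \<omega> \<partial>sample_space lam mu n)"
    by (rule nn_integral_sum) (rule Hf_meas)
  also have "\<dots> \<le> (\<Sum>k<N. exp_delay lam mu n \<sigma> j k)"
    unfolding exp_delay_def by (intro sum_mono nn_integral_mono Hf_le)
  finally show ?thesis .
qed




lemma st_meas: "(\<lambda>\<omega>. st j l t \<omega>) \<in> measurable (stream_space (measure_pmf p)) (count_space UNIV)"
proof (induction t arbitrary: l)
  case 0 show ?case by simp
next
  case (Suc t)
  have g: "(\<lambda>\<omega>. Fs j l (shd \<omega>)) \<in> measurable (stream_space (measure_pmf p)) (count_space UNIV)"
    by (rule measurable_compose[OF measurable_shd]) simp
  have f: "(\<lambda>\<omega>. st j i t (stl \<omega>)) \<in> measurable (stream_space (measure_pmf p)) (count_space UNIV)" for i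
    by (rule measurable_compose[OF measurable_stl Suc.IH])
  show ?case by (simp only: st.simps) (rule measurable_compose_countable[OF f g])
qed

lemma st_meas_h: "(\<lambda>\<omega>. h (st j l t \<omega>) :: ennreal) \<in> borel_measurable (stream_space (measure_pmf p))"
  by (rule measurable_compose[OF st_meas]) simp

definition Exs :: "slot pmf \<Rightarrow> nat \<Rightarrow> (nat \<Rightarrow> ennreal) \<Rightarrow> nat \<Rightarrow> nat \<Rightarrow> ennreal" where
  "Exs p j h l t = (\<integral>\<^sup>+\<omega>. h (st j l t \<omega>) \<partial>stream_space (measure_pmf p))"

lemma Ex_0: "Exs p j h l 0 = h l"
proof -
  interpret P: prob_space "stream_space (measure_pmf p)"
    by (rule prob_space.prob_space_stream_space[OF prob_space_measure_pmf])
  show ?thesis unfolding Exs_def by (simp add: P.emeasure_space_1)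
qed

lemma Ex_Suc: "Exs p j h l (Suc t) = (\<integral>\<^sup>+x. Exs p j h (Fs j l x) t \<partial>measure_pmf p)"
  unfolding Exs_def
  by (subst prob_space.nn_integral_stream_space[OF prob_space_measure_pmf st_meas_h]) simp

definition fsb :: "nat \<Rightarrow> bool \<Rightarrow> bool \<Rightarrow> nat" where
  "fsb l a b = nat (int l + (if a then 1 else 0) - (if b then 1 else 0))"

lemma Fs_fsb: "Fs j l x = fsb l (fst x) (snd x j)"
  unfolding Fs_def fsb_def xv_def by simp

lemma fsb_simps: "fsb l True True = l" "fsb l True False = Suc l" "fsb l False False = l"
  "fsb l False True = l - 1"
  unfolding fsb_def by auto

lemma slot_integral_real:
  fixes hr :: "bool \<Rightarrow> bool \<Rightarrow> real"
  assumes j: "j < n" and l: "0 \<le> lam" "lam \<le> 1" and m: "0 \<le> mu" "mu \<le> 1"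
    and nn: "\<And>a b. 0 \<le> hr a b"
  shows "(\<integral>\<^sup>+x. ennreal (hr (fst x) (snd x j)) \<partial>measure_pmf (slot_pmf lam mu n)) =
    ennreal (lam * (mu * hr True True + (1 - mu) * hr True False) +
             (1 - lam) * (mu * hr False True + (1 - mu) * hr False False))"
  using l m nn
  by (subst slot_integral[OF j l m]) (simp add: ennreal_plus ennreal_mult add_nonneg_nonneg mult_nonneg_nonneg)

lemma pmf_const: "(\<integral>\<^sup>+x. c \<partial>measure_pmf q) = c"
  by (simp add: measure_pmf.emeasure_space_1)

context
  fixes lam mu :: real and n j :: nat
  assumes pr: "0 < lam" "lam < mu" "mu < 1" "j < n"
begin

lemma l01: "0 \<le> lam" "lam \<le> 1" "0 \<le> mu" "mu \<le> 1" using pr by auto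

lemma step_real:
  fixes hr :: "nat \<Rightarrow> real"
  assumes nn: "\<And>l. 0 \<le> hr l"
  shows "(\<integral>\<^sup>+x. ennreal (hr (Fs j l x)) \<partial>measure_pmf (slot_pmf lam mu n)) =
    ennreal (lam * (mu * hr l + (1 - mu) * hr (Suc l)) + (1 - lam) * (mu * hr (l - 1) + (1 - mu) * hr l))"
  unfolding Fs_fsb
  using slot_integral_real[OF pr(4) l01, of "\<lambda>a b. hr (fsb l a b)"] nn
  by (simp add: fsb_simps)

lemma key_g:
  "ennreal (2 * (mu - lam)) * ennreal (real l) +
     (\<integral>\<^sup>+x. ennreal (real (Fs j l x) * (real (Fs j l x) + 1)) \<partial>measure_pmf (slot_pmf lam mu n))
   = ennreal (2 * (lam * (1 - mu))) + ennreal (real l * (real l + 1))"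
proof -
  have R: "(\<integral>\<^sup>+x. ennreal (real (Fs j l x) * (real (Fs j l x) + 1)) \<partial>measure_pmf (slot_pmf lam mu n))
    = ennreal (lam * (mu * (real l * (real l + 1)) + (1 - mu) * (real (Suc l) * (real (Suc l) + 1)))
       + (1 - lam) * (mu * (real (l - 1) * (real (l - 1) + 1)) + (1 - mu) * (real l * (real l + 1))))"
    by (rule step_real[of "\<lambda>l. real l * (real l + 1)"]) simp
  have eq: "2 * (mu - lam) * real l + (lam * (mu * (real l * (real l + 1)) + (1 - mu) * (real (Suc l) * (real (Suc l) + 1)))
       + (1 - lam) * (mu * (real (l - 1) * (real (l - 1) + 1)) + (1 - mu) * (real l * (real l + 1))))
     = 2 * (lam * (1 - mu)) + real l * (real l + 1)"
  proof (cases l)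
    case 0 then show ?thesis by (simp add: algebra_simps)
  next
    case (Suc m) then show ?thesis by (simp add: algebra_simps)
  qed
  have nn1: "0 \<le> lam * (mu * (real l * (real l + 1)) + (1 - mu) * (real (Suc l) * (real (Suc l) + 1)))
       + (1 - lam) * (mu * (real (l - 1) * (real (l - 1) + 1)) + (1 - mu) * (real l * (real l + 1)))"
    using l01 by (intro add_nonneg_nonneg mult_nonneg_nonneg) auto
  have "ennreal (2 * (mu - lam)) * ennreal (real l) = ennreal (2 * (mu - lam) * real l)"
    using pr by (simp add: ennreal_mult)
  then show ?thesis unfolding R
    using eq nn1 pr by (simp add: ennreal_plus[symmetric] del: ennreal_plus)
qed

lemma ident:
  "ennreal (2 * (mu - lam)) * (\<Sum>t<N. Exs (slot_pmf lam mu n) j (\<lambda>l. ennreal (real l)) l t)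
   + Exs (slot_pmf lam mu n) j (\<lambda>l. ennreal (real l * (real l + 1))) l N
   = ennreal (2 * (lam * (1 - mu)) * real N) + ennreal (real l * (real l + 1))"
proof (induction N arbitrary: l)
  case 0
  then show ?case by (simp add: Ex_0)
next
  case (Suc N)
  let ?P = "slot_pmf lam mu n"
  let ?e = "\<lambda>l. ennreal (real l)"
  let ?g = "\<lambda>l. ennreal (real l * (real l + 1))"
  let ?c = "ennreal (2 * (mu - lam))"
  have S: "(\<Sum>t<Suc N. Exs ?P j ?e l t) = ?e l + (\<integral>\<^sup>+x. (\<Sum>t<N. Exs ?P j ?e (Fs j l x) t) \<partial>measure_pmf ?P)"
    by (subst sum.lessThan_Suc_shift) (simp add: Ex_0 Ex_Suc nn_integral_sum del: sum.lessThan_Suc)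
  have "?c * (\<Sum>t<Suc N. Exs ?P j ?e l t) + Exs ?P j ?g l (Suc N)
     = ?c * ?e l + (\<integral>\<^sup>+x. (?c * (\<Sum>t<N. Exs ?P j ?e (Fs j l x) t) + Exs ?P j ?g (Fs j l x) N) \<partial>measure_pmf ?P)"
    unfolding S Ex_Suc[of _ _ _ _ N]
    by (simp add: distrib_left nn_integral_add nn_integral_cmult add.assoc)
  also have "\<dots> = ?c * ?e l + (\<integral>\<^sup>+x. (ennreal (2 * (lam * (1 - mu)) * real N) + ?g (Fs j l x)) \<partial>measure_pmf ?P)"
    using Suc.IH by simp
  also have "\<dots> = ennreal (2 * (lam * (1 - mu)) * real N) + (?c * ?e l + (\<integral>\<^sup>+x. ?g (Fs j l x) \<partial>measure_pmf ?P))"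
    by (simp add: nn_integral_add pmf_const add_ac)
  also have "\<dots> = ennreal (2 * (lam * (1 - mu)) * real N) + (ennreal (2 * (lam * (1 - mu))) + ?g l)"
    using key_g[of l] by simp
  also have "\<dots> = ennreal (2 * (lam * (1 - mu)) * real (Suc N)) + ?g l"
    using l01 pr by (simp add: ennreal_plus[symmetric] add.assoc[symmetric] distrib_left del: ennreal_plus)
  finally show ?case .
qed

definition "pp = lam * (1 - mu)"
definition "qq = mu * (1 - lam)"
definition "zz = (pp + qq) / (2 * pp)"
definition "ph = lam * (mu + (1 - mu) * zz) + (1 - lam) * (mu / zz + (1 - mu))"

lemma pq: "0 < pp" "pp < qq" "0 < qq"
  using pr unfolding pp_def qq_def by (auto simp: algebra_simps)

lemma zz_gt: "1 < zz"
  using pq unfolding zz_def by (simp add: field_simps)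

lemma ph_bounds: "0 < ph" "ph < 1"
proof -
  have z: "0 < zz" using zz_gt by simp
  show "0 < ph" unfolding ph_def using pr z
    by (intro add_pos_nonneg mult_pos_pos) (auto intro!: add_nonneg_nonneg mult_nonneg_nonneg)
  have "ph - 1 = (zz - 1) * (pp - qq / zz)"
    unfolding ph_def pp_def qq_def using z by (simp add: field_simps)
  moreover have "pp - qq / zz < 0"
  proof -
    have "qq / zz = 2 * pp * qq / (pp + qq)" unfolding zz_def using pq by (simp add: field_simps)
    moreover have "pp < 2 * pp * qq / (pp + qq)" using pq by (simp add: field_simps)
    ultimately show ?thesis by simp
  qed
  ultimately show "ph < 1" using zz_gt by (smt (verit) mult_pos_neg)
qed

lemma zstep: "lam * (mu * zz ^ l + (1 - mu) * zz ^ Suc l) + (1 - lam) * (mu * zz ^ (l - 1) + (1 - mu) * zz ^ l)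
   \<le> ph * zz ^ l + qq"
proof (cases l)
  case 0
  have "(1 - lam) * mu / zz \<ge> 0" using pr zz_gt by simp
  then show ?thesis using 0 unfolding ph_def qq_def by (simp add: algebra_simps)
next
  case (Suc m)
  have z: "zz \<noteq> 0" using zz_gt by simp
  have d: "mu / zz * zz = mu" using z by simp
  have "ph * zz ^ l = (lam * (mu + (1 - mu) * zz) + (1 - lam) * (1 - mu)) * zz * zz ^ m
      + (1 - lam) * mu * zz ^ m"
    unfolding ph_def Suc power_Suc using z by (simp add: field_simps)
  also have "\<dots> = lam * (mu * zz ^ l + (1 - mu) * zz ^ Suc l) + (1 - lam) * (mu * zz ^ (l - 1) + (1 - mu) * zz ^ l)"
    unfolding Suc power_Suc by (simp add: algebra_simps)
  finally have "lam * (mu * zz ^ l + (1 - mu) * zz ^ Suc l) + (1 - lam) * (mu * zz ^ (l - 1) + (1 - mu) * zz ^ l)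
      = ph * zz ^ l" by simp
  then show ?thesis using pq by simp
qed

lemma zbound:
  "Exs (slot_pmf lam mu n) j (\<lambda>l. ennreal (zz ^ l)) l t \<le> ennreal (ph ^ t * zz ^ l + qq * (\<Sum>i<t. ph ^ i))"
proof (induction t arbitrary: l)
  case 0
  then show ?case by (simp add: Ex_0)
next
  case (Suc t)
  let ?P = "slot_pmf lam mu n"
  let ?B = "qq * (\<Sum>i<t. ph ^ i)"
  have nnB: "0 \<le> ?B" using pq ph_bounds by (intro mult_nonneg_nonneg sum_nonneg) auto
  have zp: "0 < zz" using zz_gt by simp
  have "Exs ?P j (\<lambda>l. ennreal (zz ^ l)) l (Suc t) \<le> (\<integral>\<^sup>+x. ennreal (ph ^ t * zz ^ (Fs j l x) + ?B) \<partial>measure_pmf ?P)"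
    unfolding Ex_Suc by (intro nn_integral_mono Suc.IH)
  also have "\<dots> = ennreal (lam * (mu * (ph ^ t * zz ^ l + ?B) + (1 - mu) * (ph ^ t * zz ^ Suc l + ?B))
      + (1 - lam) * (mu * (ph ^ t * zz ^ (l - 1) + ?B) + (1 - mu) * (ph ^ t * zz ^ l + ?B)))"
    by (rule step_real) (use nnB zp ph_bounds in auto)
  also have "\<dots> \<le> ennreal (ph ^ Suc t * zz ^ l + qq * (\<Sum>i<Suc t. ph ^ i))"
  proof (rule ennreal_leI)
    have "lam * (mu * (ph ^ t * zz ^ l + ?B) + (1 - mu) * (ph ^ t * zz ^ Suc l + ?B))
      + (1 - lam) * (mu * (ph ^ t * zz ^ (l - 1) + ?B) + (1 - mu) * (ph ^ t * zz ^ l + ?B))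
      = ph ^ t * (lam * (mu * zz ^ l + (1 - mu) * zz ^ Suc l) + (1 - lam) * (mu * zz ^ (l - 1) + (1 - mu) * zz ^ l)) + ?B"
      by (simp add: algebra_simps)
    also have "\<dots> \<le> ph ^ t * (ph * zz ^ l + qq) + ?B"
      using zstep[of l] ph_bounds by (intro add_right_mono mult_left_mono) auto
    also have "\<dots> = ph ^ Suc t * zz ^ l + qq * (\<Sum>i<Suc t. ph ^ i)"
      by (simp add: algebra_simps)
    finally show "lam * (mu * (ph ^ t * zz ^ l + ?B) + (1 - mu) * (ph ^ t * zz ^ Suc l + ?B))
      + (1 - lam) * (mu * (ph ^ t * zz ^ (l - 1) + ?B) + (1 - mu) * (ph ^ t * zz ^ l + ?B))
      \<le> ph ^ Suc t * zz ^ l + qq * (\<Sum>i<Suc t. ph ^ i)" .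
  qed
  finally show ?case .
qed

lemma zbound0: "Exs (slot_pmf lam mu n) j (\<lambda>l. ennreal (zz ^ l)) 0 t \<le> ennreal (1 + qq / (1 - ph))"
proof -
  have "ph ^ t \<le> 1" using ph_bounds by (simp add: power_le_one)
  moreover have "(\<Sum>i<t. ph ^ i) \<le> 1 / (1 - ph)"
  proof -
    have "(\<Sum>i<t. ph ^ i) = (1 - ph ^ t) / (1 - ph)" using ph_bounds by (simp add: sum_gp_strict)
    also have "\<dots> \<le> 1 / (1 - ph)" using ph_bounds by (intro divide_right_mono) auto
    finally show ?thesis .
  qed
  ultimately have "ph ^ t * zz ^ 0 + qq * (\<Sum>i<t. ph ^ i) \<le> 1 + qq * (1 / (1 - ph))"
    using pq by (intro add_mono mult_left_mono) auto
  then have "ph ^ t * zz ^ 0 + qq * (\<Sum>i<t. ph ^ i) \<le> 1 + qq / (1 - ph)" by simp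
  then show ?thesis using zbound[of 0 t] by (meson ennreal_leI order_trans)
qed

end




lemma poly_exp_bound:
  fixes z :: real assumes z: "1 < z"
  shows "\<exists>K\<ge>0. \<forall>l::nat. real l * (real l + 1) \<le> K * z ^ l"
proof -
  have "(\<lambda>l::nat. real l * (real l + 1) / z ^ l) \<longlonglongrightarrow> 0" using z by real_asymp
  then have "Bseq (\<lambda>l::nat. real l * (real l + 1) / z ^ l)" by (intro convergent_imp_Bseq convergentI)
  then obtain K where K: "K > 0" "\<And>l. norm (real l * (real l + 1) / z ^ l) \<le> K"
    unfolding Bseq_def by blast
  have "real l * (real l + 1) \<le> K * z ^ l" for l :: nat
  proof -
    have zp: "0 < z ^ l" using z by simp
    have "real l * (real l + 1) / z ^ l \<le> K" using K(2)[of l] abs_of_pos[OF zp] by simp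
    then show ?thesis using zp by (simp add: divide_le_eq)
  qed
  then show ?thesis using K(1) by (intro exI[of _ K]) auto
qed

lemma aux_eq: "(E::real) \<noteq> 0 \<Longrightarrow> (2 * P * x - C) / (2 * E) / n = P / E * (x / n) - C / (2 * E) / n"
  by (simp add: diff_divide_distrib)

context
  fixes lam mu :: real and n j :: nat
  assumes pr: "0 < lam" "lam < mu" "mu < 1" "j < n"
begin

lemmas pq' = pq[OF pr] and zz_gt' = zz_gt[OF pr] and ph_bounds' = ph_bounds[OF pr]
  and zbound0' = zbound0[OF pr] and ident' = ident[OF pr]

lemma Gbound: "\<exists>C\<ge>0. \<forall>N. Exs (slot_pmf lam mu n) j (\<lambda>l. ennreal (real l * (real l + 1))) 0 N \<le> ennreal C"
proof -
  obtain K where K: "K \<ge> 0" "\<And>l::nat. real l * (real l + 1) \<le> K * zz lam mu ^ l"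
    using poly_exp_bound[OF zz_gt'] by blast
  define C where "C = K * (1 + qq lam mu / (1 - ph lam mu))"
  have C0: "0 \<le> C" unfolding C_def using K pq' ph_bounds' by (intro mult_nonneg_nonneg add_nonneg_nonneg divide_nonneg_nonneg) auto
  have "Exs (slot_pmf lam mu n) j (\<lambda>l. ennreal (real l * (real l + 1))) 0 N \<le> ennreal C" for N
  proof -
    have "Exs (slot_pmf lam mu n) j (\<lambda>l. ennreal (real l * (real l + 1))) 0 N
       \<le> (\<integral>\<^sup>+\<omega>. ennreal K * ennreal (zz lam mu ^ st j 0 N \<omega>) \<partial>stream_space (measure_pmf (slot_pmf lam mu n)))"
      unfolding Exs_def
    proof (rule nn_integral_mono)
      fix \<omega>
      show "ennreal (real (st j 0 N \<omega>) * (real (st j 0 N \<omega>) + 1)) \<le> ennreal K * ennreal (zz lam mu ^ st j 0 N \<omega>)"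
      proof -
        have "ennreal (real (st j 0 N \<omega>) * (real (st j 0 N \<omega>) + 1)) \<le> ennreal (K * zz lam mu ^ st j 0 N \<omega>)"
          by (rule ennreal_leI) (rule K(2))
        also have "\<dots> = ennreal K * ennreal (zz lam mu ^ st j 0 N \<omega>)"
          using K zz_gt' by (simp add: ennreal_mult)
        finally show ?thesis .
      qed
    qed
    also have "\<dots> = ennreal K * Exs (slot_pmf lam mu n) j (\<lambda>l. ennreal (zz lam mu ^ l)) 0 N"
      unfolding Exs_def by (rule nn_integral_cmult) (rule st_meas_h)
    also have "\<dots> \<le> ennreal K * ennreal (1 + qq lam mu / (1 - ph lam mu))"
      by (intro mult_left_mono zbound0') auto
    also have "\<dots> = ennreal C" unfolding C_def
      by (rule ennreal_mult[symmetric]) (use K pq' ph_bounds' in \<open>auto intro!: add_nonneg_nonneg divide_nonneg_nonneg\<close>)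
    finally show ?thesis .
  qed
  then show ?thesis using C0 by blast
qed

lemma link:
  "(\<integral>\<^sup>+\<omega>. of_nat (\<Sum>d<N. st j 0 (Suc d) \<omega>) \<partial>sample_space lam mu n)
   = (\<Sum>t<Suc N. Exs (slot_pmf lam mu n) j (\<lambda>l. ennreal (real l)) 0 t)"
proof -
  have "(\<integral>\<^sup>+\<omega>. of_nat (\<Sum>d<N. st j 0 (Suc d) \<omega>) \<partial>sample_space lam mu n)
     = (\<integral>\<^sup>+\<omega>. (\<Sum>d<N. ennreal (real (st j 0 (Suc d) \<omega>))) \<partial>sample_space lam mu n)"
    by (simp add: of_nat_sum ennreal_of_nat_eq_real_of_nat)
  also have "\<dots> = (\<Sum>d<N. Exs (slot_pmf lam mu n) j (\<lambda>l. ennreal (real l)) 0 (Suc d))"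
    unfolding sample_space_def Exs_def by (rule nn_integral_sum) (rule st_meas_h)
  also have "\<dots> = (\<Sum>t<Suc N. Exs (slot_pmf lam mu n) j (\<lambda>l. ennreal (real l)) 0 t)"
    by (subst sum.lessThan_Suc_shift) (simp add: Ex_0 del: sum.lessThan_Suc)
  finally show ?thesis .
qed

lemma X_lower:
  assumes C0: "0 \<le> C" and CB: "\<And>N. Exs (slot_pmf lam mu n) j (\<lambda>l. ennreal (real l * (real l + 1))) 0 N \<le> ennreal C"
  shows "ennreal ((2 * (lam * (1 - mu)) * real (Suc N) - C) / (2 * (mu - lam)))
     \<le> (\<Sum>t<Suc N. Exs (slot_pmf lam mu n) j (\<lambda>l. ennreal (real l)) 0 t)"
proof -
  let ?X = "(\<Sum>t<Suc N. Exs (slot_pmf lam mu n) j (\<lambda>l. ennreal (real l)) 0 t)"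
  have eps: "0 < 2 * (mu - lam)" using pr by simp
  have I: "ennreal (2 * (mu - lam)) * ?X + Exs (slot_pmf lam mu n) j (\<lambda>l. ennreal (real l * (real l + 1))) 0 (Suc N)
     = ennreal (2 * (lam * (1 - mu)) * real (Suc N))"
    using ident'[where N="Suc N" and l=0] by simp
  have le: "ennreal (2 * (lam * (1 - mu)) * real (Suc N)) \<le> ennreal (2 * (mu - lam)) * ?X + ennreal C"
    unfolding I[symmetric] by (intro add_left_mono CB)
  show ?thesis
  proof (cases "?X = \<top>")
    case True show ?thesis unfolding True by (rule top_greatest)
  next
    case False
    then obtain x where x: "?X = ennreal x" "0 \<le> x" by (cases ?X) auto
    have "ennreal (2 * (mu - lam)) * ?X + ennreal C = ennreal (2 * (mu - lam) * x + C)"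
      using x eps C0 by (simp add: ennreal_mult ennreal_plus)
    with le have "2 * (lam * (1 - mu)) * real (Suc N) \<le> 2 * (mu - lam) * x + C"
      using x eps C0 by (subst ennreal_le_iff[symmetric]) auto
    then have "(2 * (lam * (1 - mu)) * real (Suc N) - C) / (2 * (mu - lam)) \<le> x"
      using eps by (simp add: divide_le_eq algebra_simps)
    then show ?thesis unfolding x by (rule ennreal_leI)
  qed
qed

lemma avg_lower:
  fixes \<sigma> :: "('F::field) scheme"
  assumes adm: "admissible \<sigma>"
  shows "ennreal (lam * (1 - mu) / (mu - lam)) \<le> avg_delay lam mu n \<sigma> j"
proof -
  obtain C where C0: "0 \<le> C" and CB: "\<And>N. Exs (slot_pmf lam mu n) j (\<lambda>l. ennreal (real l * (real l + 1))) 0 N \<le> ennreal C"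
    using Gbound by blast
  define b where "b N = lam * (1 - mu) / (mu - lam) - (C / (2 * (mu - lam))) / real N" for N :: nat
  have eps: "0 < mu - lam" using pr by simp
  have bound: "ennreal (b N) \<le> (\<Sum>k<N. exp_delay lam mu n \<sigma> j k) / of_nat N" if N: "1 \<le> N" for N
  proof -
    define y where "y = (2 * (lam * (1 - mu)) * real (Suc N) - C) / (2 * (mu - lam))"
    have Xy: "ennreal y \<le> (\<Sum>k<N. exp_delay lam mu n \<sigma> j k)"
      using X_lower[OF C0 CB, of N] link[of N] delay_sum_ge[OF adm, where j=j and N=N and lam=lam and mu=mu and n=n]
      unfolding y_def by simp
    have hby: "b N \<le> y / real N"
    proof -
      have e1: "y / real N = lam * (1 - mu) / (mu - lam) * (real (Suc N) / real N) - (C / (2 * (mu - lam))) / real N"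
        unfolding y_def using aux_eq[of "mu - lam" "lam * (1 - mu)" "real (Suc N)" C "real N"] eps by simp
      have r: "1 \<le> real (Suc N) / real N" using N by (simp add: le_divide_eq)
      have pnn: "0 \<le> lam * (1 - mu) / (mu - lam)" using pr eps by simp
      have e2: "lam * (1 - mu) / (mu - lam) \<le> lam * (1 - mu) / (mu - lam) * (real (Suc N) / real N)"
        using mult_left_mono[OF r pnn] by simp
      show ?thesis unfolding b_def e1 using e2 by simp
    qed
    show ?thesis
    proof (cases "b N \<le> 0")
      case True then show ?thesis by (simp add: ennreal_neg)
    next
      case False
      then have "0 < y / real N" using hby by simp
      then have ypos: "0 \<le> y" using N by (simp add: zero_less_divide_iff)
      have "ennreal (b N) \<le> ennreal (y / real N)" by (rule ennreal_leI[OF hby])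
      also have "\<dots> = ennreal y / of_nat N"
        using ypos N by (simp add: divide_ennreal[symmetric] ennreal_of_nat_eq_real_of_nat)
      also have "\<dots> \<le> (\<Sum>k<N. exp_delay lam mu n \<sigma> j k) / of_nat N"
        by (rule divide_right_mono_ennreal[OF Xy])
      finally show ?thesis .
    qed
  qed
  have lim: "(\<lambda>N. ennreal (b N)) \<longlonglongrightarrow> ennreal (lam * (1 - mu) / (mu - lam))"
    unfolding b_def by (intro tendsto_ennrealI tendsto_eq_intros lim_const_over_n) auto
  have "ennreal (lam * (1 - mu) / (mu - lam)) = limsup (\<lambda>N. ennreal (b N))"
    using lim by (simp add: lim_imp_Limsup)
  also have "\<dots> \<le> avg_delay lam mu n \<sigma> j"
    unfolding avg_delay_def
    by (rule Limsup_mono) (use bound in \<open>auto simp: eventually_sequentially\<close>)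
  finally show ?thesis .
qed

end

lemma cmp_aux:
  fixes c lam mu :: real
  assumes "0 < lam" "lam < mu" "c * mu \<le> lam * (1 - mu)"
  shows "c / (1 - lam / mu) \<le> lam * (1 - mu) / (mu - lam)"
proof -
  have mu: "0 < mu" using assms by simp
  have "1 - lam / mu = (mu - lam) / mu" using mu by (simp add: field_simps)
  then have "c / (1 - lam / mu) = c * mu / (mu - lam)" using mu by simp
  also have "\<dots> \<le> lam * (1 - mu) / (mu - lam)"
    using assms by (intro divide_right_mono) auto
  finally show ?thesis .
qed

theorem lemma8:
  fixes n :: nat
  assumes "n \<ge> 1"
  shows "(\<forall>mu. 0 < mu \<and> mu < 1 \<longrightarrow> (\<exists>c>0. \<exists>\<delta>>0. \<forall>lam. 0 < lam \<and> lam < mu \<and> 1 - \<delta> < lam / mu \<longrightarrow>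
            (\<forall>\<sigma> :: ('F::{field,finite}) scheme. admissible \<sigma> \<longrightarrow> (\<forall>j<n.
               ennreal (c / (1 - lam / mu)) \<le> avg_delay lam mu n \<sigma> j)))) \<and>
         (\<forall>lam. 0 < lam \<and> lam < 1 \<longrightarrow> (\<exists>c>0. \<exists>\<delta>>0. \<forall>mu. lam < mu \<and> mu < 1 \<and> 1 - \<delta> < lam / mu \<longrightarrow>
            (\<forall>\<sigma> :: 'F scheme. admissible \<sigma> \<longrightarrow> (\<forall>j<n.
               ennreal (c / (1 - lam / mu)) \<le> avg_delay lam mu n \<sigma> j))))"
proof (intro conjI allI impI)
  fix mu :: real assume mu: "0 < mu \<and> mu < 1"
  show "\<exists>c>0. \<exists>\<delta>>0. \<forall>lam. 0 < lam \<and> lam < mu \<and> 1 - \<delta> < lam / mu \<longrightarrow>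
            (\<forall>\<sigma> :: 'F scheme. admissible \<sigma> \<longrightarrow> (\<forall>j<n.
               ennreal (c / (1 - lam / mu)) \<le> avg_delay lam mu n \<sigma> j))"
  proof -
  have H: "\<forall>lam. 0 < lam \<and> lam < mu \<and> 1 - 1 / 2 < lam / mu \<longrightarrow>
            (\<forall>\<sigma> :: 'F scheme. admissible \<sigma> \<longrightarrow> (\<forall>j<n.
               ennreal ((1 - mu) / 2 / (1 - lam / mu)) \<le> avg_delay lam mu n \<sigma> j))"
  proof (intro allI impI)
    fix lam :: real and \<sigma> :: "'F scheme" and j
    assume l: "0 < lam \<and> lam < mu \<and> 1 - 1 / 2 < lam / mu" and adm: "admissible \<sigma>" and j: "j < n"
    have "mu < 2 * lam" using l mu by (simp add: less_divide_eq)
    then have "(1 - mu) * (mu / 2) \<le> (1 - mu) * lam" using mu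
      by (intro mult_left_mono) auto
    then have "(1 - mu) / 2 * mu \<le> lam * (1 - mu)" by (simp add: algebra_simps)
    then have "(1 - mu) / 2 / (1 - lam / mu) \<le> lam * (1 - mu) / (mu - lam)"
      using l by (intro cmp_aux) auto
    then have "ennreal ((1 - mu) / 2 / (1 - lam / mu)) \<le> ennreal (lam * (1 - mu) / (mu - lam))"
      by (rule ennreal_leI)
    also have "\<dots> \<le> avg_delay lam mu n \<sigma> j"
      using avg_lower[of lam mu j n \<sigma>] l mu j adm by auto
    finally show "ennreal ((1 - mu) / 2 / (1 - lam / mu)) \<le> avg_delay lam mu n \<sigma> j" .
  qed
  have c0: "0 < (1 - mu) / 2" using mu by simp
  show ?thesis
    by (rule exI[of _ "(1 - mu) / 2"], rule conjI[OF c0], rule exI[of _ "1 / 2 :: real"], rule conjI, simp, rule H)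
  qed
next
  fix lam :: real assume lam: "0 < lam \<and> lam < 1"
  show "\<exists>c>0. \<exists>\<delta>>0. \<forall>mu. lam < mu \<and> mu < 1 \<and> 1 - \<delta> < lam / mu \<longrightarrow>
            (\<forall>\<sigma> :: 'F scheme. admissible \<sigma> \<longrightarrow> (\<forall>j<n.
               ennreal (c / (1 - lam / mu)) \<le> avg_delay lam mu n \<sigma> j))"
  proof -
  have H: "\<forall>mu. lam < mu \<and> mu < 1 \<and> 1 - (1 - lam) / (1 + lam) < lam / mu \<longrightarrow>
            (\<forall>\<sigma> :: 'F scheme. admissible \<sigma> \<longrightarrow> (\<forall>j<n.
               ennreal (lam * (1 - lam) / 2 / (1 - lam / mu)) \<le> avg_delay lam mu n \<sigma> j))"
  proof (intro allI impI)
    fix mu :: real and \<sigma> :: "'F scheme" and j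
    assume m: "lam < mu \<and> mu < 1 \<and> 1 - (1 - lam) / (1 + lam) < lam / mu" and adm: "admissible \<sigma>" and j: "j < n"
    have mu0: "0 < mu" using m lam by simp
    have "1 - (1 - lam) / (1 + lam) = 2 * lam / (1 + lam)" using lam by (simp add: field_simps)
    with m have "2 * lam / (1 + lam) < lam / mu" by simp
    then have "2 * lam * mu < lam * (1 + lam)" using lam mu0 by (simp add: divide_less_eq less_divide_eq field_simps)
    then have m2: "2 * mu < 1 + lam" using lam by simp
    have "lam * (1 - lam) / 2 * mu \<le> lam * (1 - mu)"
    proof -
      have "(1 - lam) * mu \<le> 2 * (1 - mu)"
      proof -
        have "(1 - lam) * mu \<le> (1 - lam)" using lam m by (simp add: mult_le_cancel_left1)
        also have "\<dots> \<le> 2 * (1 - mu)" using m2 by simp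
        finally show ?thesis .
      qed
      then have "lam / 2 * ((1 - lam) * mu) \<le> lam / 2 * (2 * (1 - mu))"
        using lam by (intro mult_left_mono) auto
      then show ?thesis by (simp add: algebra_simps)
    qed
    then have "lam * (1 - lam) / 2 / (1 - lam / mu) \<le> lam * (1 - mu) / (mu - lam)"
      using m lam by (intro cmp_aux) auto
    then have "ennreal (lam * (1 - lam) / 2 / (1 - lam / mu)) \<le> ennreal (lam * (1 - mu) / (mu - lam))"
      by (rule ennreal_leI)
    also have "\<dots> \<le> avg_delay lam mu n \<sigma> j"
      using avg_lower[of lam mu j n \<sigma>] lam m j adm by auto
    finally show "ennreal (lam * (1 - lam) / 2 / (1 - lam / mu)) \<le> avg_delay lam mu n \<sigma> j" .
  qed
  have c0: "0 < lam * (1 - lam) / 2" using lam by simp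
  have d0: "0 < (1 - lam) / (1 + lam)" using lam by simp
  show ?thesis
    by (rule exI[of _ "lam * (1 - lam) / 2"], rule conjI[OF c0], rule exI[of _ "(1 - lam) / (1 + lam)"], rule conjI[OF d0], rule H)
  qed
qed


end
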